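(* $\mathrm{1QFA}/n\neq\mathrm{1QFA}/Rn$.
   Context: A 1qfa is a one-way measure-many quantum finite automaton. For equal-length strings $x,y$, $\genfrac{[}{]}{0pt}{}{x}{y}$ is the two-track string with $x$ on the upper track and $y$ on the lower track. $\mathrm{1QFA}/n$ is the family of languages $L$ for which there exist a 1qfa $M$, $\varepsilon\in[0,1/2)$ and a deterministic advice function $h:\mathbb{N}\to\Gamma^*$ with $|h(n)|=n$ such that $M$ on $\genfrac{[}{]}{0pt}{}{x}{h(|x|)}$ outputs $L(x)$ with probability at least $1-\varepsilon$ for every $x$. $\mathrm{1QFA}/Rn$ is defined analogously with randomized advice, i.e. a probability ensemble $\{D_n\}$ ($D_n$ a distribution on $\Gamma^n$), where $M$ on $\genfrac{[}{]}{0pt}{}{x}{y}$ with $y\sim D_n$ outputs $L(x)$ with probability at least $1-\varepsilon$. *)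

theory Defs
  imports "HOL-Probability.Probability"
begin

datatype 'c tsym = LEnd | REnd | Sym 'c

text \<open>A one-way measure-many quantum finite automaton (Kondacs--Watrous style).
  States are 0..<nst M; delta a is the transition matrix for tape symbol a;
  q0 is the initial state; acc / rej are the accepting / rejecting states,
  all other states are non-halting.\<close>
record 's qfa =
  nst :: nat
  delta :: "'s \<Rightarrow> nat \<Rightarrow> nat \<Rightarrow> complex"
  q0 :: nat
  acc :: "nat set"
  rej :: "nat set"

definition unitary_mat :: "nat \<Rightarrow> (nat \<Rightarrow> nat \<Rightarrow> complex) \<Rightarrow> bool" where
  "unitary_mat k U \<longleftrightarrow>
     (\<forall>i<k. \<forall>j<k. (\<Sum>l<k. cnj (U l i) * U l j) = (if i = j then 1 else 0))"

definition wf_qfa :: "'c set \<Rightarrow> 'c tsym qfa \<Rightarrow> bool" where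
  "wf_qfa A M \<longleftrightarrow> q0 M < nst M \<and> acc M \<subseteq> {..<nst M} \<and> rej M \<subseteq> {..<nst M}
     \<and> acc M \<inter> rej M = {}
     \<and> (\<forall>a \<in> {LEnd, REnd} \<union> Sym ` A. unitary_mat (nst M) (delta M a))"

definition mat_app :: "nat \<Rightarrow> (nat \<Rightarrow> nat \<Rightarrow> complex) \<Rightarrow> (nat \<Rightarrow> complex) \<Rightarrow> nat \<Rightarrow> complex" where
  "mat_app k U v = (\<lambda>i. if i < k then (\<Sum>j<k. U i j * v j) else 0)"

definition proj :: "nat set \<Rightarrow> (nat \<Rightarrow> complex) \<Rightarrow> nat \<Rightarrow> complex" where
  "proj S v = (\<lambda>i. if i \<in> S then v i else 0)"

definition normsq :: "nat \<Rightarrow> (nat \<Rightarrow> complex) \<Rightarrow> real" where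
  "normsq k v = (\<Sum>i<k. (cmod (v i))\<^sup>2)"

text \<open>Measure-many run on a tape content, starting from (unnormalised) state vector v:
  returns (total acceptance probability, total rejection probability).\<close>
fun qrun :: "'s qfa \<Rightarrow> 's list \<Rightarrow> (nat \<Rightarrow> complex) \<Rightarrow> real \<times> real" where
  "qrun M [] v = (0, 0)"
| "qrun M (a # w) v =
     (let u = mat_app (nst M) (delta M a) v;
          r = qrun M w (proj ({..<nst M} - acc M - rej M) u)
      in (normsq (nst M) (proj (acc M) u) + fst r, normsq (nst M) (proj (rej M) u) + snd r))"

definition basis :: "nat \<Rightarrow> nat \<Rightarrow> complex" where
  "basis q = (\<lambda>i. if i = q then 1 else 0)"

definition p_acc :: "'c tsym qfa \<Rightarrow> 'c list \<Rightarrow> real" where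
  "p_acc M w = fst (qrun M (LEnd # map Sym w @ [REnd]) (basis (q0 M)))"

definition p_rej :: "'c tsym qfa \<Rightarrow> 'c list \<Rightarrow> real" where
  "p_rej M w = snd (qrun M (LEnd # map Sym w @ [REnd]) (basis (q0 M)))"

text \<open>Alphabets are finite sets of natural-number codes; a language over Sigma is a set
  of words in lists Sigma. The two-track string [x; y] is zip x y.\<close>

definition in_1QFA_n :: "nat set \<Rightarrow> nat list set \<Rightarrow> bool" where
  "in_1QFA_n \<Sigma> L \<longleftrightarrow> (\<exists>(\<Gamma>::nat set) (M::(nat \<times> nat) tsym qfa) (\<epsilon>::real) (h::nat \<Rightarrow> nat list).
     finite \<Gamma> \<and> wf_qfa (\<Sigma> \<times> \<Gamma>) M \<and> 0 \<le> \<epsilon> \<and> \<epsilon> < 1/2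
     \<and> (\<forall>n. length (h n) = n \<and> set (h n) \<subseteq> \<Gamma>)
     \<and> (\<forall>x \<in> lists \<Sigma>.
          (x \<in> L \<longrightarrow> p_acc M (zip x (h (length x))) \<ge> 1 - \<epsilon>)
        \<and> (x \<notin> L \<longrightarrow> p_rej M (zip x (h (length x))) \<ge> 1 - \<epsilon>)))"

definition in_1QFA_Rn :: "nat set \<Rightarrow> nat list set \<Rightarrow> bool" where
  "in_1QFA_Rn \<Sigma> L \<longleftrightarrow> (\<exists>(\<Gamma>::nat set) (M::(nat \<times> nat) tsym qfa) (\<epsilon>::real) (D::nat \<Rightarrow> nat list pmf).
     finite \<Gamma> \<and> wf_qfa (\<Sigma> \<times> \<Gamma>) M \<and> 0 \<le> \<epsilon> \<and> \<epsilon> < 1/2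
     \<and> (\<forall>n. set_pmf (D n) \<subseteq> {y. length y = n \<and> set y \<subseteq> \<Gamma>})
     \<and> (\<forall>x \<in> lists \<Sigma>.
          (x \<in> L \<longrightarrow> measure_pmf.expectation (D (length x)) (\<lambda>y. p_acc M (zip x y)) \<ge> 1 - \<epsilon>)
        \<and> (x \<notin> L \<longrightarrow> measure_pmf.expectation (D (length x)) (\<lambda>y. p_rej M (zip x y)) \<ge> 1 - \<epsilon>)))"

definition QFA_n :: "(nat set \<times> nat list set) set" where
  "QFA_n = {(\<Sigma>, L). finite \<Sigma> \<and> \<Sigma> \<noteq> {} \<and> L \<subseteq> lists \<Sigma> \<and> in_1QFA_n \<Sigma> L}"

definition QFA_Rn :: "(nat set \<times> nat list set) set" where
  "QFA_Rn = {(\<Sigma>, L). finite \<Sigma> \<and> \<Sigma> \<noteq> {} \<and> L \<subseteq> lists \<Sigma> \<and> in_1QFA_Rn \<Sigma> L}"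

end

theory Submission
  imports Defs
begin

definition vadd :: "(nat \<Rightarrow> complex) \<Rightarrow> (nat \<Rightarrow> complex) \<Rightarrow> nat \<Rightarrow> complex" where
  "vadd v w = (\<lambda>i. v i + w i)"
definition vsub :: "(nat \<Rightarrow> complex) \<Rightarrow> (nat \<Rightarrow> complex) \<Rightarrow> nat \<Rightarrow> complex" where
  "vsub v w = (\<lambda>i. v i - w i)"

lemma mat_app_add: "mat_app k U (vadd v w) = vadd (mat_app k U v) (mat_app k U w)"
  by (auto simp: mat_app_def vadd_def fun_eq_iff algebra_simps sum.distrib)

lemma proj_add: "proj S (vadd v w) = vadd (proj S v) (proj S w)"
  by (auto simp: proj_def vadd_def fun_eq_iff)

lemma normsq_nonneg: "0 \<le> normsq k v" by (simp add: normsq_def sum_nonneg)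

lemma normsq_L2: "sqrt (normsq k v) = L2_set (\<lambda>i. cmod (v i)) {..<k}"
  by (simp add: normsq_def L2_set_def)

lemma normsq_tri: "sqrt (normsq k (vadd v w)) \<le> sqrt (normsq k v) + sqrt (normsq k w)"
proof -
  have "L2_set (\<lambda>i. cmod (vadd v w i)) {..<k} \<le> L2_set (\<lambda>i. cmod (v i) + cmod (w i)) {..<k}"
    by (rule L2_set_mono) (auto simp: vadd_def norm_triangle_ineq)
  also have "... \<le> L2_set (\<lambda>i. cmod (v i)) {..<k} + L2_set (\<lambda>i. cmod (w i)) {..<k}"
    by (rule L2_set_triangle_ineq)
  finally show ?thesis by (simp add: normsq_L2)
qed

lemma normsq_cnj: "complex_of_real (normsq k v) = (\<Sum>i<k. cnj (v i) * v i)"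
  unfolding normsq_def of_real_sum
  by (rule sum.cong) (simp_all only: complex_norm_square mult.commute)

lemma sum_swap3:
  "(\<Sum>i<k. \<Sum>j<k. \<Sum>l<k. F i j l) = (\<Sum>j<k. \<Sum>l<k. \<Sum>i<k. (F i j l :: complex))"
proof -
  have "(\<Sum>i<k. \<Sum>j<k. \<Sum>l<k. F i j l) = (\<Sum>j<k. \<Sum>i<k. \<Sum>l<k. F i j l)" by (rule sum.swap)
  also have "... = (\<Sum>j<k. \<Sum>l<k. \<Sum>i<k. F i j l)" by (rule sum.cong[OF refl], rule sum.swap)
  finally show ?thesis .
qed

lemma unitary_normsq:
  assumes U: "unitary_mat k U"
  shows "normsq k (mat_app k U v) = normsq k v"
proof -
  have "complex_of_real (normsq k (mat_app k U v))
      = (\<Sum>i<k. cnj (\<Sum>j<k. U i j * v j) * (\<Sum>l<k. U i l * v l))"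
    by (simp add: normsq_cnj mat_app_def)
  also have "... = (\<Sum>i<k. \<Sum>j<k. \<Sum>l<k. cnj (U i j * v j) * (U i l * v l))"
    by (simp only: cnj_sum sum_product)
  also have "... = (\<Sum>i<k. \<Sum>j<k. \<Sum>l<k. (cnj (v j) * v l) * (cnj (U i j) * U i l))"
    by (intro sum.cong refl) (simp add: mult_ac)
  also have "... = (\<Sum>j<k. \<Sum>l<k. \<Sum>i<k. (cnj (v j) * v l) * (cnj (U i j) * U i l))"
    by (rule sum_swap3)
  also have "... = (\<Sum>j<k. \<Sum>l<k. (cnj (v j) * v l) * (\<Sum>i<k. cnj (U i j) * U i l))"
    by (simp only: sum_distrib_left)
  also have "... = (\<Sum>j<k. \<Sum>l<k. (cnj (v j) * v l) * (if j = l then 1 else 0))"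
    using U by (intro sum.cong refl) (simp add: unitary_mat_def)
  also have "... = (\<Sum>j<k. cnj (v j) * v j)"
    by (intro sum.cong refl) (simp add: if_distrib cong: if_cong)
  also have "... = complex_of_real (normsq k v)" by (simp add: normsq_cnj)
  finally show ?thesis using of_real_eq_iff by blast
qed

abbreviation NH where "NH M \<equiv> {..<nst M} - acc M - rej M"

fun nh :: "'s qfa \<Rightarrow> 's list \<Rightarrow> (nat \<Rightarrow> complex) \<Rightarrow> nat \<Rightarrow> complex" where
  "nh M [] v = v"
| "nh M (a # p) v = nh M p (proj ({..<nst M} - acc M - rej M) (mat_app (nst M) (delta M a) v))"

lemma qrun_append:
  "qrun M (p @ s) v = (fst (qrun M p v) + fst (qrun M s (nh M p v)), snd (qrun M p v) + snd (qrun M s (nh M p v)))"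
  by (induction p arbitrary: v) (auto simp: Let_def)

lemma qrun_nonneg: "0 \<le> fst (qrun M s v) \<and> 0 \<le> snd (qrun M s v)"
  by (induction s arbitrary: v) (auto simp: Let_def normsq_nonneg)

lemma proj3: assumes "A \<inter> R = {}"
  shows "normsq k (proj A u) + normsq k (proj R u) + normsq k (proj ({..<k} - A - R) u) \<le> normsq k u"
proof -
  have "normsq k (proj A u) + normsq k (proj R u) + normsq k (proj ({..<k} - A - R) u)
    = (\<Sum>i<k. (cmod (proj A u i))\<^sup>2 + (cmod (proj R u i))\<^sup>2 + (cmod (proj ({..<k} - A - R) u i))\<^sup>2)"
    by (simp add: normsq_def sum.distrib)
  also have "... \<le> (\<Sum>i<k. (cmod (u i))\<^sup>2)"
    by (rule sum_mono) (use assms in \<open>auto simp: proj_def\<close>)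
  finally show ?thesis by (simp add: normsq_def)
qed

lemma qrun_cons:
  assumes "acc M \<inter> rej M = {}" "\<forall>a\<in>set s. unitary_mat (nst M) (delta M a)"
  shows "fst (qrun M s v) + snd (qrun M s v) + normsq (nst M) (nh M s v) \<le> normsq (nst M) v"
  using assms(2)
proof (induction s arbitrary: v)
  case Nil then show ?case by simp
next
  case (Cons a s)
  let ?u = "mat_app (nst M) (delta M a) v"
  have IH: "fst (qrun M s (proj (NH M) ?u)) + snd (qrun M s (proj (NH M) ?u)) + normsq (nst M) (nh M s (proj (NH M) ?u)) \<le> normsq (nst M) (proj (NH M) ?u)"
    using Cons by simp
  have "normsq (nst M) (proj (acc M) ?u) + normsq (nst M) (proj (rej M) ?u) + normsq (nst M) (proj (NH M) ?u) \<le> normsq (nst M) ?u"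
    by (rule proj3[OF assms(1)])
  also have "... = normsq (nst M) v" using Cons.prems by (simp add: unitary_normsq)
  finally show ?case using IH by (simp add: Let_def)
qed

lemma acc_tri:
  "sqrt (fst (qrun M s (vadd v w))) \<le> sqrt (fst (qrun M s v)) + sqrt (fst (qrun M s w))"
proof (induction s arbitrary: v w)
  case Nil then show ?case by simp
next
  case (Cons a s)
  define k where "k = nst M"
  define uv where "uv = mat_app k (delta M a) v"
  define uw where "uw = mat_app k (delta M a) w"
  define av where "av = sqrt (normsq k (proj (acc M) uv))"
  define aw where "aw = sqrt (normsq k (proj (acc M) uw))"
  define avw where "avw = sqrt (normsq k (proj (acc M) (vadd uv uw)))"
  define bv where "bv = sqrt (fst (qrun M s (proj (NH M) uv)))"
  define bw where "bw = sqrt (fst (qrun M s (proj (NH M) uw)))"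
  define bvw where "bvw = sqrt (fst (qrun M s (proj (NH M) (vadd uv uw))))"
  have e: "\<And>x. fst (qrun M (a # s) x) = normsq k (proj (acc M) (mat_app k (delta M a) x)) + fst (qrun M s (proj (NH M) (mat_app k (delta M a) x)))"
    by (simp add: Let_def k_def)
  have nn: "\<And>x. 0 \<le> fst (qrun M s x)" using qrun_nonneg by blast
  have l: "fst (qrun M (a # s) (vadd v w)) = avw\<^sup>2 + bvw\<^sup>2"
    unfolding e by (simp del: qrun.simps add: mat_app_add avw_def bvw_def uv_def uw_def normsq_nonneg nn)
  have lv: "fst (qrun M (a # s) v) = av\<^sup>2 + bv\<^sup>2"
    unfolding e by (simp del: qrun.simps add: av_def bv_def uv_def normsq_nonneg nn)
  have lw: "fst (qrun M (a # s) w) = aw\<^sup>2 + bw\<^sup>2"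
    unfolding e by (simp del: qrun.simps add: aw_def bw_def uw_def normsq_nonneg nn)
  have h1: "avw \<le> av + aw" unfolding avw_def av_def aw_def proj_add by (rule normsq_tri)
  have h2: "bvw \<le> bv + bw" unfolding bvw_def bv_def bw_def proj_add by (rule Cons.IH)
  have p: "0 \<le> avw" "0 \<le> bvw" by (simp_all add: avw_def bvw_def normsq_nonneg nn)
  have "sqrt (avw\<^sup>2 + bvw\<^sup>2) \<le> sqrt ((av + aw)\<^sup>2 + (bv + bw)\<^sup>2)"
    using h1 h2 p by (intro real_sqrt_le_mono add_mono power_mono) auto
  also have "... \<le> sqrt (av\<^sup>2 + bv\<^sup>2) + sqrt (aw\<^sup>2 + bw\<^sup>2)"
    by (rule real_sqrt_sum_squares_triangle_ineq)
  finally show ?case using l lv lw by simp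
qed

lemma acc_le:
  assumes "acc M \<inter> rej M = {}" "\<forall>a\<in>set s. unitary_mat (nst M) (delta M a)"
  shows "fst (qrun M s v) \<le> normsq (nst M) v"
  using qrun_cons[OF assms, of v] qrun_nonneg[of M s v] normsq_nonneg[of "nst M" "nh M s v"] by linarith

lemma normsq_vsub_comm: "normsq k (vsub v w) = normsq k (vsub w v)"
  by (simp add: normsq_def vsub_def norm_minus_commute)

lemma acc_lip:
  assumes "acc M \<inter> rej M = {}" "\<forall>a\<in>set s. unitary_mat (nst M) (delta M a)"
  shows "\<bar>sqrt (fst (qrun M s v)) - sqrt (fst (qrun M s w))\<bar> \<le> sqrt (normsq (nst M) (vsub v w))"
proof -
  have 1: "vadd (vsub v w) w = v" "vadd (vsub w v) v = w" by (auto simp: vadd_def vsub_def)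
  have "sqrt (fst (qrun M s v)) \<le> sqrt (fst (qrun M s (vsub v w))) + sqrt (fst (qrun M s w))"
    using acc_tri[of M s "vsub v w" w] 1 by simp
  moreover have "sqrt (fst (qrun M s w)) \<le> sqrt (fst (qrun M s (vsub w v))) + sqrt (fst (qrun M s v))"
    using acc_tri[of M s "vsub w v" v] 1 by simp
  moreover have "sqrt (fst (qrun M s (vsub v w))) \<le> sqrt (normsq (nst M) (vsub v w))"
    using acc_le[OF assms] by simp
  moreover have "sqrt (fst (qrun M s (vsub w v))) \<le> sqrt (normsq (nst M) (vsub v w))"
    using acc_le[OF assms, of "vsub w v"] normsq_vsub_comm[of "nst M" v w] by simp
  ultimately show ?thesis by linarith
qed

lemma acc_diff:
  assumes "acc M \<inter> rej M = {}" "\<forall>a\<in>set s. unitary_mat (nst M) (delta M a)"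
    and "normsq (nst M) v \<le> 1" "normsq (nst M) w \<le> 1"
  shows "\<bar>fst (qrun M s v) - fst (qrun M s w)\<bar> \<le> 2 * sqrt (normsq (nst M) (vsub v w))"
proof -
  define a where "a = sqrt (fst (qrun M s v))"
  define b where "b = sqrt (fst (qrun M s w))"
  have nn: "0 \<le> fst (qrun M s v)" "0 \<le> fst (qrun M s w)" using qrun_nonneg[of M s v] qrun_nonneg[of M s w] by auto
  have a1: "a \<le> 1" unfolding a_def using acc_le[OF assms(1,2), of v] assms(3) by simp
  have b1: "b \<le> 1" unfolding b_def using acc_le[OF assms(1,2), of w] assms(4) by simp
  have a0: "0 \<le> a" and b0: "0 \<le> b" using nn by (simp_all add: a_def b_def)
  have ab: "\<bar>a - b\<bar> \<le> sqrt (normsq (nst M) (vsub v w))" unfolding a_def b_def by (rule acc_lip[OF assms(1,2)])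
  have e: "fst (qrun M s v) - fst (qrun M s w) = (a - b) * (a + b)"
    using nn by (simp add: a_def b_def algebra_simps)
  have "\<bar>fst (qrun M s v) - fst (qrun M s w)\<bar> = \<bar>a - b\<bar> * (a + b)"
    using a0 b0 by (simp add: e abs_mult)
  also have "... \<le> sqrt (normsq (nst M) (vsub v w)) * 2"
    using a0 b0 a1 b1 ab by (intro mult_mono) (auto simp: normsq_nonneg)
  finally show ?thesis by simp
qed

definition Lq :: "nat list set" where
  "Lq = {x \<in> lists {0,1}. odd (length x) \<or> take (length x div 2) x = drop (length x div 2) x}"

lemma normsq_basis: "q < k \<Longrightarrow> normsq k (basis q) = 1"
proof -
  assume q: "q < k"
  have e: "\<And>i. (cmod (basis q i))\<^sup>2 = (if i = q then 1 else 0)"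
    by (auto simp: basis_def)
  show ?thesis using q by (simp add: normsq_def e)
qed

lemma disc_close:
  fixes x x' d :: real
  assumes "d > 0" "-1 \<le> x" "-1 \<le> x'" "nat \<lfloor>(x+1)/d\<rfloor> = nat \<lfloor>(x'+1)/d\<rfloor>"
  shows "\<bar>x - x'\<bar> < d"
proof -
  have f0: "0 \<le> \<lfloor>(x+1)/d\<rfloor>" "0 \<le> \<lfloor>(x'+1)/d\<rfloor>" using assms by auto
  have fe: "\<lfloor>(x+1)/d\<rfloor> = \<lfloor>(x'+1)/d\<rfloor>" using eq_nat_nat_iff[OF f0] assms(4) by simp
  have "\<bar>(x+1)/d - (x'+1)/d\<bar> < 1"
    using fe floor_correct[of "(x+1)/d"] floor_correct[of "(x'+1)/d"] by linarith
  moreover have "(x+1)/d - (x'+1)/d = (x - x') / d" using assms(1) by (simp add: field_simps)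
  ultimately have "\<bar>x - x'\<bar> / d < 1" using assms(1) by simp
  thus ?thesis using assms(1) by (simp add: divide_less_eq)
qed

lemma disc_le:
  fixes x d :: real
  assumes "d > 0" "x \<le> 1"
  shows "nat \<lfloor>(x+1)/d\<rfloor> \<le> nat \<lfloor>2/d\<rfloor>"
proof -
  have "(x+1)/d \<le> 2/d" using assms by (simp add: divide_right_mono)
  thus ?thesis by (intro nat_mono floor_mono)
qed

lemma lower: "\<not> in_1QFA_n {0,1} Lq"
proof
  assume "in_1QFA_n {0,1} Lq"
  then obtain \<Gamma> and M :: "(nat \<times> nat) tsym qfa" and \<epsilon> :: real and h :: "nat \<Rightarrow> nat list" where H:
    "finite \<Gamma> \<and> wf_qfa ({0,1} \<times> \<Gamma>) M \<and> 0 \<le> \<epsilon> \<and> \<epsilon> < 1/2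
     \<and> (\<forall>n. length (h n) = n \<and> set (h n) \<subseteq> \<Gamma>)
     \<and> (\<forall>x \<in> lists {0,1}.
          (x \<in> Lq \<longrightarrow> p_acc M (zip x (h (length x))) \<ge> 1 - \<epsilon>)
        \<and> (x \<notin> Lq \<longrightarrow> p_rej M (zip x (h (length x))) \<ge> 1 - \<epsilon>))"
    unfolding in_1QFA_n_def by (elim exE) (rule that)
  have fin: "finite \<Gamma>" and wf: "wf_qfa ({0,1} \<times> \<Gamma>) M"
    and e0: "0 \<le> \<epsilon>" and e1: "\<epsilon> < 1/2" using H by simp_all
  have hh: "\<And>n. length (h n) = n \<and> set (h n) \<subseteq> \<Gamma>" using H by simp
  have corr: "\<And>x. x \<in> lists {0,1} \<Longrightarrow> (x \<in> Lq \<longrightarrow> p_acc M (zip x (h (length x))) \<ge> 1 - \<epsilon>) \<and> (x \<notin> Lq \<longrightarrow> p_rej M (zip x (h (length x))) \<ge> 1 - \<epsilon>)"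
    using H by blast
  define k where "k = nst M"
  have disj: "acc M \<inter> rej M = {}" and q0k: "q0 M < k"
    and uni: "\<And>a. a \<in> {LEnd, REnd} \<union> Sym ` ({0,1} \<times> \<Gamma>) \<Longrightarrow> unitary_mat k (delta M a)"
    using wf by (auto simp: wf_qfa_def k_def)
  define g where "g = 1 - 2 * \<epsilon>"
  have g0: "g > 0" using e1 by (simp add: g_def)
  define d where "d = g / (4 * real k + 4)"
  have d0: "d > 0" using g0 by (simp add: d_def)
  have dg: "d * (4 * real k + 4) = g" unfolding d_def by (simp add: field_simps)
  define B where "B = nat \<lfloor>2 / d\<rfloor>"
  define disc where "disc = (\<lambda>x::real. nat \<lfloor>(x + 1) / d\<rfloor>)"
  define C where "C = (B + 1) ^ (2 * k + 1)"
  define m where "m = C"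
  define y where "y = h (2 * m)"
  define y1 where "y1 = take m y"
  define y2 where "y2 = drop m y"
  define U where "U = {u :: nat list. set u \<subseteq> {0,1} \<and> length u = m}"
  define pre where "pre = (\<lambda>u :: nat list. LEnd # map Sym (zip u y1))"
  define suf where "suf = (\<lambda>v :: nat list. map Sym (zip v y2) @ [REnd])"
  define A where "A = (\<lambda>u. fst (qrun M (pre u) (basis (q0 M))))"
  define psi where "psi = (\<lambda>u. nh M (pre u) (basis (q0 M)))"
  define F where "F = (\<lambda>u j. if j = 0 then disc (A u) else if j \<le> k then disc (Re (psi u (j - 1))) else disc (Im (psi u (j - 1 - k))))"
  define feat where "feat = (\<lambda>u. map (F u) [0..<2*k+1])"
  have ly: "length y = 2 * m" "set y \<subseteq> \<Gamma>" using hh y_def by auto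
  have ly1: "length y1 = m" "length y2 = m" using ly by (simp_all add: y1_def y2_def)
  have sy: "set y1 \<subseteq> \<Gamma>" "set y2 \<subseteq> \<Gamma>" using ly(2) set_take_subset[of m y] set_drop_subset[of m y]
    by (auto simp: y1_def y2_def)
  have tape: "LEnd # map Sym (zip (u @ v) (h (length (u @ v)))) @ [REnd] = pre u @ suf v"
    if "u \<in> U" "v \<in> U" for u v
  proof -
    have "length (u @ v) = 2 * m" using that by (simp add: U_def)
    then have "h (length (u @ v)) = y" by (simp add: y_def)
    moreover have "zip (u @ v) y = zip u y1 @ zip v y2"
      using that by (simp add: zip_append1 U_def y1_def y2_def)
    ultimately show ?thesis by (simp add: pre_def suf_def)
  qed
  have symok: "\<forall>a\<in>set (map Sym (zip u z)). unitary_mat k (delta M a)"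
    if "set u \<subseteq> {0,1}" "set z \<subseteq> \<Gamma>" for u z
  proof
    fix a assume "a \<in> set (map Sym (zip u z))"
    then obtain p q where "a = Sym (p, q)" "(p, q) \<in> set (zip u z)" by auto
    then have "p \<in> {0,1}" "q \<in> \<Gamma>" using that set_zip_leftD set_zip_rightD by fastforce+
    then show "unitary_mat k (delta M a)" using uni \<open>a = Sym (p, q)\<close> by blast
  qed
  have unit: "\<forall>a\<in>set (pre u @ suf v). unitary_mat (nst M) (delta M a)" if "u \<in> U" "v \<in> U" for u v
    using symok[of u y1] symok[of v y2] that sy uni unfolding pre_def suf_def U_def k_def by auto
  have unitsuf: "\<forall>a\<in>set (suf v). unitary_mat (nst M) (delta M a)" if "v \<in> U" for v
    using unit[OF that that] by simp
  have unitpre: "\<forall>a\<in>set (pre v). unitary_mat (nst M) (delta M a)" if "v \<in> U" for v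
    using unit[OF that that] by simp
  have pacc: "p_acc M (zip (u@v) (h (length (u@v)))) = A u + fst (qrun M (suf v) (psi u))"
    if "u \<in> U" "v \<in> U" for u v
    unfolding p_acc_def using tape[OF that] by (simp add: qrun_append A_def psi_def)
  have psum: "p_acc M (zip (u@v) (h (length (u@v)))) + p_rej M (zip (u@v) (h (length (u@v)))) \<le> 1"
    if "u \<in> U" "v \<in> U" for u v
  proof -
    have "fst (qrun M (pre u @ suf v) (basis (q0 M))) + snd (qrun M (pre u @ suf v) (basis (q0 M)))
       + normsq (nst M) (nh M (pre u @ suf v) (basis (q0 M))) \<le> normsq (nst M) (basis (q0 M))"
      by (rule qrun_cons[OF disj unit[OF that]])
    moreover have "normsq (nst M) (basis (q0 M)) = 1" using q0k normsq_basis by (simp add: k_def)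
    moreover have "0 \<le> normsq (nst M) (nh M (pre u @ suf v) (basis (q0 M)))" by (rule normsq_nonneg)
    ultimately show ?thesis unfolding p_acc_def p_rej_def using tape[OF that] by simp
  qed
  have Abnd: "0 \<le> A u \<and> A u \<le> 1 \<and> normsq k (psi u) \<le> 1" if "u \<in> U" for u
  proof -
    have "fst (qrun M (pre u) (basis (q0 M))) + snd (qrun M (pre u) (basis (q0 M)))
       + normsq (nst M) (nh M (pre u) (basis (q0 M))) \<le> normsq (nst M) (basis (q0 M))"
      by (rule qrun_cons[OF disj unitpre[OF that]])
    moreover have "normsq (nst M) (basis (q0 M)) = 1" using q0k normsq_basis by (simp add: k_def)
    moreover have "0 \<le> normsq (nst M) (nh M (pre u) (basis (q0 M)))" by (rule normsq_nonneg)
    moreover have "0 \<le> fst (qrun M (pre u) (basis (q0 M)))" "0 \<le> snd (qrun M (pre u) (basis (q0 M)))"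
      using qrun_nonneg by blast+
    ultimately show ?thesis by (simp add: A_def psi_def k_def)
  qed
  have cbnd: "cmod (psi u i) \<le> 1" if "u \<in> U" "i < k" for u i
  proof -
    have "(cmod (psi u i))\<^sup>2 \<le> normsq k (psi u)"
      unfolding normsq_def by (rule member_le_sum) (use that in auto)
    also have "... \<le> 1" using Abnd[OF that(1)] by simp
    finally show ?thesis by (metis abs_norm_cancel abs_square_le_1)
  qed
  have featU: "feat ` U \<subseteq> {xs. set xs \<subseteq> {..B} \<and> length xs = 2*k+1}"
  proof
    fix xs assume "xs \<in> feat ` U"
    then obtain u where u: "u \<in> U" "xs = feat u" by auto
    have "F u j \<le> B" if jk: "j < 2*k+1" for j
    proof -
      have "A u \<le> 1" using Abnd[OF u(1)] by simp
      moreover have "Re (psi u i) \<le> 1" "Im (psi u i) \<le> 1" if "i < k" for i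
        using cbnd[OF u(1) that] abs_Re_le_cmod[of "psi u i"] abs_Im_le_cmod[of "psi u i"] by linarith+
      ultimately show ?thesis unfolding F_def disc_def B_def
        using disc_le[OF d0] jk by auto
    qed
    then show "xs \<in> {xs. set xs \<subseteq> {..B} \<and> length xs = 2*k+1}" using u by (auto simp: feat_def)
  qed
  have cardU: "card U = 2 ^ m"
    using card_lists_length_eq[of "{0::nat,1}" m] by (simp add: U_def numeral_2_eq_2)
  have "\<not> inj_on feat U"
  proof
    assume inj: "inj_on feat U"
    have "card U \<le> card {xs. set xs \<subseteq> {..B} \<and> length xs = 2*k+1}"
      by (rule card_inj_on_le[OF inj featU]) (simp add: finite_lists_length_eq)
    also have "... = C" by (simp add: card_lists_length_eq C_def)
    finally have "2 ^ m \<le> m" using cardU by (simp add: m_def)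
    then show False using less_exp[of m] by simp
  qed
  then obtain u u' where uU: "u \<in> U" "u' \<in> U" "u \<noteq> u'" "feat u = feat u'"
    by (auto simp: inj_on_def)
  have Fe: "F u j = F u' j" if "j < 2*k+1" for j
  proof -
    have "\<forall>x\<in>set [0..<2*k+1]. F u x = F u' x" using uU(4) unfolding feat_def map_eq_conv by blast
    moreover have "j \<in> set [0..<2*k+1]" using that by (simp del: upt_Suc)
    ultimately show ?thesis by blast
  qed
  have dA: "\<bar>A u - A u'\<bar> < d"
    using Fe[of 0] disc_close[OF d0, of "A u" "A u'"] Abnd[OF uU(1)] Abnd[OF uU(2)]
    by (simp add: F_def disc_def)
  have dpsi: "cmod (psi u i - psi u' i) \<le> 2 * d" if "i < k" for i
  proof -
    have b: "-1 \<le> Re (psi v i)" "-1 \<le> Im (psi v i)" if "v \<in> U" for v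
      using cbnd[OF that \<open>i < k\<close>] abs_Re_le_cmod[of "psi v i"] abs_Im_le_cmod[of "psi v i"] by linarith+
    have "F u (i + 1) = F u' (i + 1)" using Fe that by simp
    then have "disc (Re (psi u i)) = disc (Re (psi u' i))" using that by (simp add: F_def)
    then have r: "\<bar>Re (psi u i) - Re (psi u' i)\<bar> < d"
      using disc_close[OF d0 b(1)[OF uU(1)] b(1)[OF uU(2)]] by (simp add: disc_def)
    have "F u (i + 1 + k) = F u' (i + 1 + k)" using Fe that by simp
    then have "disc (Im (psi u i)) = disc (Im (psi u' i))" using that by (simp add: F_def)
    then have im: "\<bar>Im (psi u i) - Im (psi u' i)\<bar> < d"
      using disc_close[OF d0 b(2)[OF uU(1)] b(2)[OF uU(2)]] by (simp add: disc_def)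
    have "cmod (psi u i - psi u' i) \<le> \<bar>Re (psi u i - psi u' i)\<bar> + \<bar>Im (psi u i - psi u' i)\<bar>"
      by (rule cmod_le)
    then show ?thesis using r im by simp
  qed
  have dn: "sqrt (normsq k (vsub (psi u) (psi u'))) \<le> 2 * d * real k"
  proof -
    have "sqrt (normsq k (vsub (psi u) (psi u'))) = L2_set (\<lambda>i. cmod (vsub (psi u) (psi u') i)) {..<k}"
      by (rule normsq_L2)
    also have "... \<le> (\<Sum>i<k. cmod (vsub (psi u) (psi u') i))" by (rule L2_set_le_sum) simp
    also have "... \<le> (\<Sum>i<k. 2 * d)" by (rule sum_mono) (simp add: vsub_def dpsi)
    also have "... = 2 * d * real k" by simp
    finally show ?thesis .
  qed
  have ad: "\<bar>fst (qrun M (suf u) (psi u)) - fst (qrun M (suf u) (psi u'))\<bar> \<le> 2 * sqrt (normsq k (vsub (psi u) (psi u')))"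
    unfolding k_def by (rule acc_diff[OF disj unitsuf[OF uU(1)]]) (use Abnd uU in \<open>simp_all add: k_def\<close>)
  have mem1: "u @ u \<in> Lq" and mem2: "u' @ u \<notin> Lq" and li: "u @ u \<in> lists {0,1}" "u' @ u \<in> lists {0,1}"
    using uU by (auto simp: Lq_def U_def)
  have c1: "p_acc M (zip (u@u) (h (length (u@u)))) \<ge> 1 - \<epsilon>" using corr[OF li(1)] mem1 by simp
  have c2: "p_rej M (zip (u'@u) (h (length (u'@u)))) \<ge> 1 - \<epsilon>" using corr[OF li(2)] mem2 by simp
  have c3: "p_acc M (zip (u'@u) (h (length (u'@u)))) \<le> \<epsilon>" using c2 psum[OF uU(2) uU(1)] by simp
  have "g \<le> (A u - A u') + (fst (qrun M (suf u) (psi u)) - fst (qrun M (suf u) (psi u')))"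
    using c1 c3 pacc[OF uU(1) uU(1)] pacc[OF uU(2) uU(1)] by (simp add: g_def)
  also have "... < d + 4 * d * real k" using dA ad dn by linarith
  also have "... \<le> g" using dg d0 by (simp add: algebra_simps)
  finally show False by simp
qed


definition cc :: "nat \<times> nat \<Rightarrow> nat" where "cc p = (if fst p = 1 then snd p else 0)"

fun perm :: "(nat \<times> nat) tsym \<Rightarrow> nat \<Rightarrow> nat" where
  "perm LEnd q = q"
| "perm REnd q = (if q < 4 then q + 4 else if q < 8 then q - 4 else q)"
| "perm (Sym p) q = (if q < 4 then (q + cc p) mod 4 else q)"

definition M0 :: "(nat \<times> nat) tsym qfa" where
  "M0 = \<lparr>nst = 8, delta = (\<lambda>a i j. if i = perm a j then 1 else 0), q0 = 0, acc = {4}, rej = {5,6,7}\<rparr>"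

lemma fin4: "n < (4::nat) \<Longrightarrow> n = 0 \<or> n = 1 \<or> n = 2 \<or> n = 3" by auto

lemma mod4_inj:
  assumes "q < 4" "q' < 4" "(q + c) mod 4 = (q' + c) mod (4::nat)" shows "q = q'"
proof -
  have "(q + c mod 4) mod 4 = (q' + c mod 4) mod 4" using assms(3) by (simp add: mod_add_right_eq)
  moreover have "c mod 4 < 4" by simp
  ultimately show ?thesis using fin4[OF assms(1)] fin4[OF assms(2)] fin4[of "c mod 4"] by auto
qed

lemma perm_lt: "i < 8 \<Longrightarrow> perm a i < 8"
  by (cases a) auto

lemma perm_inj: assumes "i < 8" "j < 8" "perm a i = perm a j" shows "i = j"
proof (cases a)
  case LEnd then show ?thesis using assms by simp
next
  case REnd then show ?thesis using assms by (auto split: if_splits)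
next
  case (Sym p)
  have "(x + cc p) mod 4 < 4" for x by simp
  then show ?thesis using assms Sym mod4_inj[of i j "cc p"] by (auto split: if_splits)
qed

lemma M0_unitary: "unitary_mat 8 (delta M0 a)"
  unfolding unitary_mat_def
proof (intro allI impI)
  fix i j :: nat assume ij: "i < 8" "j < 8"
  have "(\<Sum>l<8. cnj (delta M0 a l i) * delta M0 a l j) = (\<Sum>l<8. if l = perm a i then (if perm a i = perm a j then 1 else 0) else 0)"
    by (rule sum.cong) (auto simp: M0_def)
  also have "... = (if perm a i = perm a j then 1 else 0)" using perm_lt[OF ij(1)] by simp
  also have "... = (if i = j then 1 else 0)" using perm_inj[OF ij] by auto
  finally show "(\<Sum>l<8. cnj (delta M0 a l i) * delta M0 a l j) = (if i = j then 1 else 0)" .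
qed

lemma M0_wf: "wf_qfa A M0"
  unfolding wf_qfa_def using M0_unitary[unfolded M0_def] by (auto simp: M0_def)

lemma mat_perm: "q < 8 \<Longrightarrow> mat_app (nst M0) (delta M0 a) (basis q) = basis (perm a q)"
proof -
  assume q: "q < 8"
  have "mat_app 8 (delta M0 a) (basis q) i = basis (perm a q) i" for i
  proof (cases "i < 8")
    case True
    have "(\<Sum>j<8. delta M0 a i j * basis q j) = (\<Sum>j<8. if j = q then (if i = perm a q then 1 else 0) else 0)"
      by (rule sum.cong) (auto simp: M0_def basis_def)
    also have "... = (if i = perm a q then 1 else 0)" using q by simp
    finally show ?thesis using True by (simp add: mat_app_def basis_def)
  next
    case False
    then show ?thesis using perm_lt[OF q, of a] by (auto simp: mat_app_def basis_def)
  qed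
  then show ?thesis by (auto simp: M0_def fun_eq_iff)
qed

lemma proj_basis: "proj S (basis p) = (if p \<in> S then basis p else (\<lambda>_. 0))"
  by (auto simp: proj_def basis_def fun_eq_iff)

lemma normsq_zero: "normsq k (\<lambda>_. 0) = 0" by (simp add: normsq_def)

lemma run_M0: "q < 4 \<Longrightarrow> qrun M0 (map Sym z @ [REnd]) (basis q) = (if (q + sum_list (map cc z)) mod 4 = 0 then (1,0) else (0,1))"
proof (induction z arbitrary: q)
  case Nil
  have "mat_app (nst M0) (delta M0 REnd) (basis q) = basis (q + 4)" using Nil mat_perm[of q REnd] by simp
  then show ?case using Nil fin4[OF Nil] normsq_basis[of _ 8]
    by (auto simp: Let_def proj_basis normsq_zero M0_def)
next
  case (Cons p z)
  define q' where "q' = (q + cc p) mod 4"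
  have q': "q' < 4" by (simp add: q'_def)
  have "mat_app (nst M0) (delta M0 (Sym p)) (basis q) = basis q'" using Cons.prems mat_perm[of q "Sym p"] by (simp add: q'_def)
  moreover have "proj (acc M0) (basis q') = (\<lambda>_. 0)" "proj (rej M0) (basis q') = (\<lambda>_. 0)"
    "proj ({..<nst M0} - acc M0 - rej M0) (basis q') = basis q'" using q' by (auto simp: proj_basis M0_def)
  moreover have "(q' + sum_list (map cc z)) mod 4 = (q + sum_list (map cc (p # z))) mod 4"
    by (simp add: q'_def mod_add_left_eq add.assoc)
  ultimately show ?case using Cons.IH[OF q'] by (simp add: Let_def normsq_zero)
qed

lemma pacc_M0: "p_acc M0 w = (if sum_list (map cc w) mod 4 = 0 then 1 else 0)"
  and prej_M0: "p_rej M0 w = (if sum_list (map cc w) mod 4 = 0 then 0 else 1)"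
proof -
  have "mat_app (nst M0) (delta M0 LEnd) (basis 0) = basis 0" using mat_perm[of 0 LEnd] by simp
  moreover have "proj (acc M0) (basis 0) = (\<lambda>_. 0)" "proj (rej M0) (basis 0) = (\<lambda>_. 0)"
    "proj ({..<nst M0} - acc M0 - rej M0) (basis 0) = basis 0" by (auto simp: proj_basis M0_def)
  ultimately have "qrun M0 (LEnd # map Sym w @ [REnd]) (basis (q0 M0)) = qrun M0 (map Sym w @ [REnd]) (basis 0)"
    by (simp add: Let_def normsq_zero M0_def)
  then show "p_acc M0 w = (if sum_list (map cc w) mod 4 = 0 then 1 else 0)"
    "p_rej M0 w = (if sum_list (map cc w) mod 4 = 0 then 0 else 1)"
    using run_M0[of 0 w] by (simp_all add: p_acc_def p_rej_def)
qed



definition neg :: "nat \<Rightarrow> nat" where "neg r = (4 - r) mod 4"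

definition R :: "nat \<Rightarrow> nat list set" where "R m = {rs. set rs \<subseteq> {..<4} \<and> length rs = m}"

lemma R_fin: "finite (R m)"
  unfolding R_def by (rule finite_lists_length_eq) simp

lemma R_card: "card (R m) = 4 ^ m"
  unfolding R_def using card_lists_length_eq[of "{..<4::nat}" m] by simp

lemma R_ne: "R m \<noteq> {}"
proof -
  have "replicate m 0 \<in> R m" by (auto simp: R_def)
  then show ?thesis by auto
qed

lemma R0: "R 0 = {[]}" by (auto simp: R_def)

lemma R_Suc: "R (Suc m) = (\<lambda>(r, rs). r # rs) ` ({..<4} \<times> R m)"
proof
  show "R (Suc m) \<subseteq> (\<lambda>(r, rs). r # rs) ` ({..<4} \<times> R m)"
  proof
    fix xs assume "xs \<in> R (Suc m)"
    then obtain r rs where "xs = r # rs" "r < 4" "rs \<in> R m"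
      by (auto simp: R_def length_Suc_conv)
    then show "xs \<in> (\<lambda>(r, rs). r # rs) ` ({..<4} \<times> R m)" by force
  qed
qed (auto simp: R_def)

lemma sum_R_Suc: "sum f (R (Suc m)) = (\<Sum>r<4. \<Sum>rs\<in>R m. f (r # rs))"
proof -
  have "inj_on (\<lambda>(r, rs). r # rs) ({..<4::nat} \<times> R m)" by (auto simp: inj_on_def)
  then have "sum f (R (Suc m)) = sum (f \<circ> (\<lambda>(r, rs). r # rs)) ({..<4} \<times> R m)"
    by (simp add: R_Suc sum.reindex)
  also have "... = (\<Sum>(r, rs)\<in>{..<4} \<times> R m. f (r # rs))" by (simp add: comp_def case_prod_unfold)
  also have "... = (\<Sum>r<4. \<Sum>rs\<in>R m. f (r # rs))" by (rule sum.cartesian_product[symmetric])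
  finally show ?thesis .
qed

fun T :: "nat list \<Rightarrow> nat list \<Rightarrow> nat list \<Rightarrow> nat" where
  "T (a # w) (b # w') (r # rs) = cc (a, r) + cc (b, neg r) + T w w' rs"
| "T _ _ _ = 0"

lemma T_sum: "length w = length rs \<Longrightarrow> length w' = length rs \<Longrightarrow>
  sum_list (map cc (zip w rs)) + sum_list (map cc (zip w' (map neg rs))) = T w w' rs"
proof (induction rs arbitrary: w w')
  case Nil then show ?case by simp
next
  case (Cons r rs)
  then obtain a w1 b w1' where "w = a # w1" "w' = b # w1'" by (metis length_Suc_conv)
  then show ?case using Cons by simp
qed

definition cnt :: "nat \<Rightarrow> nat list \<Rightarrow> nat list \<Rightarrow> nat \<Rightarrow> real" where
  "cnt K w w' m = (\<Sum>rs\<in>R m. if (K + T w w' rs) mod 4 = 0 then 1 else 0)"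

lemma step4:
  assumes "a \<in> {0,1}" "b \<in> {0,1}"
  shows "(\<Sum>r<4. if (K + (cc (a, r) + cc (b, neg r))) mod 4 = 0 then 1 else (0::real)) = (if a = b then (if K mod 4 = 0 then 4 else 0) else 1)"
proof -
  define k0 where "k0 = K mod 4"
  have k0: "k0 < 4" by (simp add: k0_def)
  have e: "{..<4::nat} = {0,1,2,3}" by auto
  have m: "(K + x) mod 4 = (k0 + x) mod 4" for x by (simp add: k0_def mod_add_left_eq)
  have n: "neg 0 = 0" "neg 1 = 3" "neg 2 = 2" "neg 3 = 1" by (simp_all add: neg_def)
  have c: "cc (0, r) = 0" "cc (1, r) = r" for r by (simp_all add: cc_def)
  have "(\<Sum>r<4. if (K + (cc (a, r) + cc (b, neg r))) mod 4 = 0 then 1 else (0::real))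
     = (\<Sum>r\<in>{0,1,2,3}. if (k0 + (cc (a, r) + cc (b, neg r))) mod 4 = 0 then 1 else (0::real))"
    by (simp only: e m)
  also have "... = (if a = b then (if k0 = 0 then 4 else 0) else 1)"
  proof -
    have a: "a = 0 \<or> a = 1" and b: "b = 0 \<or> b = 1" using assms by auto
    have kk: "k0 = 0 \<or> k0 = 1 \<or> k0 = 2 \<or> k0 = 3" using fin4[OF k0] .
    show ?thesis using a b kk by (elim disjE) (simp_all add: cc_def neg_def)
  qed
  finally show ?thesis by (simp add: k0_def)
qed

lemma cnt_eq: "length w = m \<Longrightarrow> length w' = m \<Longrightarrow> set w \<subseteq> {0,1} \<Longrightarrow> set w' \<subseteq> {0,1} \<Longrightarrow>
  cnt K w w' m = (if w = w' then (if K mod 4 = 0 then 4 ^ m else 0) else 4 ^ m / 4)"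
proof (induction m arbitrary: K w w')
  case 0 then show ?case by (simp add: cnt_def R0)
next
  case (Suc m)
  obtain a w1 where w: "w = a # w1" using Suc.prems(1) by (metis length_Suc_conv)
  obtain b w1' where w': "w' = b # w1'" using Suc.prems(2) by (metis length_Suc_conv)
  have ab: "a \<in> {0,1}" "b \<in> {0,1}" using Suc.prems w w' by auto
  have IH: "cnt K' w1 w1' m = (if w1 = w1' then (if K' mod 4 = 0 then 4 ^ m else 0) else 4 ^ m / 4)" for K'
    using Suc.prems w w' by (intro Suc.IH) auto
  have dec: "cnt K w w' (Suc m) = (\<Sum>r<4. cnt (K + (cc (a, r) + cc (b, neg r))) w1 w1' m)"
    unfolding cnt_def sum_R_Suc w w' by (simp add: add.assoc)
  show ?case
  proof (cases "w1 = w1'")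
    case True
    have "cnt K w w' (Suc m) = (\<Sum>r<4. 4 ^ m * (if (K + (cc (a, r) + cc (b, neg r))) mod 4 = 0 then 1 else 0))"
      unfolding dec IH using True by (intro sum.cong) auto
    also have "... = 4 ^ m * (\<Sum>r<4. if (K + (cc (a, r) + cc (b, neg r))) mod 4 = 0 then 1 else (0::real))"
      by (simp add: sum_distrib_left)
    also have "... = 4 ^ m * (if a = b then (if K mod 4 = 0 then 4 else 0) else 1)"
      by (simp add: step4[OF ab])
    finally show ?thesis using True w w' by auto
  next
    case False
    have "cnt K w w' (Suc m) = (\<Sum>r<4::nat. 4 ^ m / 4)" unfolding dec IH using False by simp
    then show ?thesis using False w w' by simp
  qed
qed

definition Fm :: "nat list \<Rightarrow> nat list" where "Fm rs = rs @ map neg rs"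

definition D0 :: "nat \<Rightarrow> nat list pmf" where
  "D0 n = (if even n then map_pmf Fm (pmf_of_set (R (n div 2))) else return_pmf (replicate n 0))"

lemma D0_set: "set_pmf (D0 n) \<subseteq> {y. length y = n \<and> set y \<subseteq> {..<4}}"
proof (cases "even n")
  case True
  have "set_pmf (D0 n) = Fm ` R (n div 2)" using True R_fin R_ne by (simp add: D0_def)
  moreover have "neg r < 4" for r by (simp add: neg_def)
  ultimately show ?thesis using True by (auto simp: Fm_def R_def)
next
  case False then show ?thesis by (auto simp: D0_def)
qed

lemma exp_even:
  assumes "even (length x)" "x \<in> lists {0,1}" "m = length x div 2"
  shows "measure_pmf.expectation (D0 (length x)) (\<lambda>y. p_acc M0 (zip x y)) = cnt 0 (take m x) (drop m x) m / 4 ^ m"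
    and "measure_pmf.expectation (D0 (length x)) (\<lambda>y. p_rej M0 (zip x y)) = (4 ^ m - cnt 0 (take m x) (drop m x) m) / 4 ^ m"
proof -
  define w where "w = take m x"
  define w' where "w' = drop m x"
  have lw: "length w = m" "length w' = m" using assms by (auto simp: w_def w'_def)
  have x: "x = w @ w'" by (simp add: w_def w'_def)
  have z: "sum_list (map cc (zip x (Fm rs))) = T w w' rs" if "rs \<in> R m" for rs
  proof -
    have "length rs = m" using that by (simp add: R_def)
    then show ?thesis using lw T_sum[of w rs w'] by (simp add: x Fm_def zip_append)
  qed
  have ev: "measure_pmf.expectation (D0 (length x)) f = (\<Sum>rs\<in>R m. f (Fm rs)) / 4 ^ m" for f :: "nat list \<Rightarrow> real"
    using assms(1,3) by (simp add: D0_def integral_pmf_of_set[OF R_ne R_fin] R_card)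
  have "(\<Sum>rs\<in>R m. p_acc M0 (zip x (Fm rs))) = cnt 0 w w' m"
    unfolding cnt_def by (intro sum.cong) (auto simp: pacc_M0 z)
  then show "measure_pmf.expectation (D0 (length x)) (\<lambda>y. p_acc M0 (zip x y)) = cnt 0 (take m x) (drop m x) m / 4 ^ m"
    by (simp add: ev w_def w'_def)
  have "(\<Sum>rs\<in>R m. p_rej M0 (zip x (Fm rs))) = (\<Sum>rs\<in>R m. 1 - (if (0 + T w w' rs) mod 4 = 0 then 1 else 0))"
    by (intro sum.cong) (auto simp: prej_M0 z)
  also have "... = 4 ^ m - cnt 0 w w' m" by (simp add: sum_subtractf cnt_def R_card)
  finally show "measure_pmf.expectation (D0 (length x)) (\<lambda>y. p_rej M0 (zip x y)) = (4 ^ m - cnt 0 (take m x) (drop m x) m) / 4 ^ m"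
    by (simp add: ev w_def w'_def)
qed

lemma upper_main:
  assumes xl: "x \<in> lists {0,1}"
  shows "(x \<in> Lq \<longrightarrow> 1 - 1/4 \<le> measure_pmf.expectation (D0 (length x)) (\<lambda>y. p_acc M0 (zip x y))) \<and>
        (x \<notin> Lq \<longrightarrow> 1 - 1/4 \<le> measure_pmf.expectation (D0 (length x)) (\<lambda>y. p_rej M0 (zip x y)))"
proof (cases "even (length x)")
  case False
  have s0: "sum_list (map cc (zip x (replicate (length x) 0))) = 0"
    by (auto simp: sum_list_eq_0_iff cc_def dest: set_zip_rightD)
  have p1: "p_acc M0 (zip x (replicate (length x) 0)) = 1" by (simp only: pacc_M0 s0) simp
  have "x \<in> Lq" using False xl by (simp add: Lq_def)
  then show ?thesis using False p1 by (simp add: D0_def)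
next
  case True
  define m where "m = length x div 2"
  have lw: "length (take m x) = m" "length (drop m x) = m" "set (take m x) \<subseteq> {0,1}" "set (drop m x) \<subseteq> {0,1}"
    using True xl by (auto simp: m_def dest: in_set_takeD in_set_dropD)
  have memL: "x \<in> Lq \<longleftrightarrow> take m x = drop m x" using True xl by (simp add: Lq_def m_def)
  have c: "cnt 0 (take m x) (drop m x) m = (if take m x = drop m x then 4 ^ m else 4 ^ m / 4)"
    using cnt_eq[OF lw] by simp
  show ?thesis using exp_even[OF True xl m_def] c memL by (auto simp: field_simps)
qed

lemma upper: "in_1QFA_Rn {0,1} Lq"
  unfolding in_1QFA_Rn_def
  apply (rule exI[where x="{..<4::nat}"], rule exI[where x=M0], rule exI[where x="1/4::real"], rule exI[where x=D0])
  using M0_wf D0_set upper_main by simp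

theorem corollary5p3:
  shows "QFA_n \<noteq> QFA_Rn"
proof
  assume eq: "QFA_n = QFA_Rn"
  have "({0,1}, Lq) \<in> QFA_Rn" using upper by (auto simp: QFA_Rn_def Lq_def)
  then have "({0,1}, Lq) \<in> QFA_n" using eq by simp
  then show False using lower by (simp add: QFA_n_def)
qed

end
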